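(* Fix $\alpha\in[0,1]$ and let $f:[0,1]\to[0,1]$ satisfy $\left(1-\int_0^x\frac{dx'}{f(x')}\right)f(x)\le\alpha$ for all $x\in[0,1]$. Then $\int_0^{\alpha\log(1/\alpha)}\frac{dx}{f(x)}\ge 1-\alpha$.
   Context: $\log$ denotes the natural logarithm. *)

theory Defs
  imports "HOL-Analysis.Analysis"
begin

text \<open>The integral from 0 to x of 1/f, as an extended nonnegative real (Lebesgue).
  Division by zero is interpreted as +infinity (ennreal inverse 0 = top).\<close>
definition inv_int :: "(real \<Rightarrow> real) \<Rightarrow> real \<Rightarrow> ennreal" where
  "inv_int f x = (\<integral>\<^sup>+ t\<in>{0..x}. inverse (ennreal (f t)) \<partial>lborel)"

end

theory Submission
  imports Defs
begin

lemma meas_aux: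
  fixes f :: "real \<Rightarrow> real"
  assumes "set_borel_measurable borel {0..1} f" "a \<le> 1"
  shows "(\<lambda>t. inverse (ennreal (f t)) * indicator {0..a} t) \<in> borel_measurable lborel"
proof -
  define f1 where "f1 = (\<lambda>x. indicator {0..1} x *\<^sub>R f x)"
  have m: "f1 \<in> borel_measurable borel" using assms(1) unfolding f1_def set_borel_measurable_def .
  have "(\<lambda>t. inverse (ennreal (f1 t)) * indicator {0..a} t) \<in> borel_measurable lborel"
    using m by measurable
  moreover have "(\<lambda>t. inverse (ennreal (f1 t)) * indicator {0..a} t)
      = (\<lambda>t. inverse (ennreal (f t)) * indicator {0..a} t)"
    using assms(2) by (auto simp: f1_def indicator_def fun_eq_iff)
  ultimately show ?thesis by simp
qed

lemma step_aux:
  fixes f :: "real \<Rightarrow> real" and c :: ennreal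
  assumes "set_borel_measurable borel {0..1} f" "0 \<le> a" "a \<le> b" "b \<le> 1"
    and "\<And>t. a < t \<Longrightarrow> t \<le> b \<Longrightarrow> c \<le> inverse (ennreal (f t))"
  shows "inv_int f b \<ge> inv_int f a + c * ennreal (b - a)"
proof -
  let ?g = "\<lambda>t. inverse (ennreal (f t))"
  have ma: "(\<lambda>t. ?g t * indicator {0..a} t) \<in> borel_measurable lborel"
    using meas_aux[OF assms(1)] assms by auto
  have mc: "(\<lambda>t. c * indicator {a<..b} t) \<in> borel_measurable lborel" by measurable
  have "inv_int f a + c * ennreal (b - a)
      = (\<integral>\<^sup>+ t. ?g t * indicator {0..a} t \<partial>lborel) + (\<integral>\<^sup>+ t. c * indicator {a<..b} t \<partial>lborel)"
    using assms by (simp add: inv_int_def nn_integral_cmult_indicator)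
  also have "\<dots> = (\<integral>\<^sup>+ t. ?g t * indicator {0..a} t + c * indicator {a<..b} t \<partial>lborel)"
    by (rule nn_integral_add[symmetric, OF ma mc])
  also have "\<dots> \<le> (\<integral>\<^sup>+ t. ?g t * indicator {0..b} t \<partial>lborel)"
  proof (rule nn_integral_mono)
    fix t
    show "?g t * indicator {0..a} t + c * indicator {a<..b} t \<le> ?g t * indicator {0..b} t"
      using assms(2,3) assms(5)[of t] by (auto simp: indicator_def)
  qed
  also have "\<dots> = inv_int f b" by (simp add: inv_int_def)
  finally show ?thesis .
qed

theorem lemma7:
  fixes f :: "real \<Rightarrow> real" and \<alpha> :: real
  assumes "0 < \<alpha>" and "\<alpha> \<le> 1"
    and "set_borel_measurable borel {0..1} f"
    and "\<forall>x\<in>{0..1}. 0 \<le> f x \<and> f x \<le> 1"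
    and "\<forall>x\<in>{0..1}. (1 - inv_int f x) * ennreal (f x) \<le> ennreal \<alpha>"
  shows "inv_int f (\<alpha> * ln (1 / \<alpha>)) \<ge> ennreal (1 - \<alpha>)"
proof (rule ccontr)
  define T where "T = \<alpha> * ln (1 / \<alpha>)"
  define L where "L = ln (1 / \<alpha>)"
  define F where "F = inv_int f"
  define Fr where "Fr = (\<lambda>x. enn2real (F x))"
  assume "\<not> ?thesis"
  hence FT: "F T < ennreal (1 - \<alpha>)" by (simp add: F_def T_def not_le)
  have L0: "L \<ge> 0" using assms(1,2) by (simp add: L_def)
  have T0: "T \<ge> 0" using assms(1) L0 by (simp add: T_def L_def)
  have "L \<le> 1/\<alpha> - 1" unfolding L_def using ln_le_minus_one[of "1/\<alpha>"] assms(1) by simp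
  hence "\<alpha> * L \<le> 1 - \<alpha>" using assms(1) by (simp add: field_simps)
  hence T1: "T \<le> 1" using assms(1) by (simp add: T_def L_def)
  have mono: "F a \<le> F b" if "0 \<le> a" "a \<le> b" "b \<le> 1" for a b
    using step_aux[OF assms(3) that, of 0] by (simp add: F_def)
  have Ffin: "F x = ennreal (Fr x)" "Fr x < 1 - \<alpha>" "0 \<le> Fr x" if "0 \<le> x" "x \<le> T" for x
  proof -
    have "F x < ennreal (1 - \<alpha>)" using mono[OF that(1,2)] T1 FT by simp
    hence fin: "F x < top" using order.strict_trans ennreal_less_top by blast
    show e: "F x = ennreal (Fr x)" unfolding Fr_def using fin by (simp add: less_top)
    show n: "0 \<le> Fr x" unfolding Fr_def by simp
    show "Fr x < 1 - \<alpha>" using \<open>F x < ennreal (1 - \<alpha>)\<close> e n by (simp add: ennreal_less_iff)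
  qed
  have key: "(1 - Fr b) * (1 + (b - a) / \<alpha>) \<le> 1 - Fr a" if "0 \<le> a" "a \<le> b" "b \<le> T" for a b
  proof -
    define c where "c = (1 - Fr b) / \<alpha>"
    have c0: "c \<ge> 0" using Ffin[of b] that assms(1,2) by (simp add: c_def)
    have "F b \<ge> F a + ennreal c * ennreal (b - a)"
      unfolding F_def
    proof (rule step_aux[OF assms(3) that(1,2)])
      show "b \<le> 1" using that T1 by simp
      fix t assume t: "a < t" "t \<le> b"
      have t01: "t \<in> {0..1}" using t that T1 by auto
      have ft: "0 \<le> f t" using assms(4) t01 by auto
      have Ft: "F t = ennreal (Fr t)" "Fr t < 1 - \<alpha>" "0 \<le> Fr t" using Ffin[of t] t that by auto
      have Frtb: "Fr t \<le> Fr b"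
      proof -
        have "F t \<le> F b" using mono[of t b] t that T1 by auto
        thus ?thesis using Ft Ffin[of b] that by simp
      qed
      have "(1 - inv_int f t) * ennreal (f t) \<le> ennreal \<alpha>" using assms(5) t01 by auto
      moreover have "(1::ennreal) - ennreal (Fr t) = ennreal (1 - Fr t)"
        using ennreal_minus[of "Fr t" 1] Ft by simp
      moreover have "ennreal (1 - Fr t) * ennreal (f t) = ennreal ((1 - Fr t) * f t)"
        using Ft ft assms(1) by (intro ennreal_mult[symmetric]) auto
      ultimately have "ennreal ((1 - Fr t) * f t) \<le> ennreal \<alpha>"
        using Ft by (simp add: F_def)
      hence le: "(1 - Fr t) * f t \<le> \<alpha>" using assms(1) by simp
      show "ennreal c \<le> inverse (ennreal (f t))"
      proof (cases "f t = 0")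
        case True thus ?thesis by simp
      next
        case False
        hence fp: "f t > 0" using ft by simp
        have "(1 - Fr b) * f t \<le> (1 - Fr t) * f t" using Frtb fp by (intro mult_right_mono) auto
        hence "(1 - Fr b) * f t \<le> \<alpha>" using le by simp
        hence "c \<le> inverse (f t)" using fp assms(1) by (simp add: c_def field_simps)
        thus ?thesis using fp by (simp add: inverse_ennreal)
      qed
    qed
    hence "ennreal (Fr b) \<ge> ennreal (Fr a + c * (b - a))"
      using Ffin[of a] Ffin[of b] that c0 by (simp add: ennreal_mult'[symmetric] ennreal_plus[symmetric] del: ennreal_plus)
    hence "Fr b \<ge> Fr a + c * (b - a)" using Ffin[of b] that by (simp add: ennreal_le_iff)
    thus ?thesis using assms(1) by (simp add: c_def field_simps)
  qed
  have bound: "(1 - Fr T) * (1 + L / real n) ^ n \<le> 1" if npos: "n > 0" for n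
  proof -
    define h where "h = T / real n"
    have h0: "h \<ge> 0" using T0 by (simp add: h_def)
    have hL: "h / \<alpha> = L / real n" using assms(1) by (simp add: h_def T_def L_def)
    have "(1 - Fr (real k * h)) * (1 + h / \<alpha>) ^ k \<le> 1" if "k \<le> n" for k
      using that
    proof (induction k)
      case 0
      show ?case using Ffin[of 0] T0 by simp
    next
      case (Suc k)
      have kh: "real (Suc k) * h \<le> T"
      proof -
        have "real (Suc k) * h \<le> real n * h" using Suc.prems h0 by (intro mult_right_mono) auto
        also have "\<dots> = T" using npos by (simp add: h_def)
        finally show ?thesis .
      qed
      have "(1 - Fr (real (Suc k) * h)) * (1 + h / \<alpha>) \<le> 1 - Fr (real k * h)"
        using key[of "real k * h" "real (Suc k) * h"] h0 kh by (simp add: algebra_simps)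
      hence "(1 - Fr (real (Suc k) * h)) * (1 + h / \<alpha>) * (1 + h / \<alpha>) ^ k
           \<le> (1 - Fr (real k * h)) * (1 + h / \<alpha>) ^ k"
        using h0 assms(1) by (intro mult_right_mono) auto
      also have "\<dots> \<le> 1" using Suc by simp
      finally show ?case by (metis mult.assoc power_Suc)
    qed
    moreover have "real n * h = T" using npos by (simp add: h_def)
    ultimately show ?thesis using hL by (metis order_refl)
  qed
  have lim: "(\<lambda>n. (1 - Fr T) * (1 + L / real n) ^ n) \<longlonglongrightarrow> (1 - Fr T) * exp L"
    by (intro tendsto_mult tendsto_const tendsto_exp_limit_sequentially)
  have "(1 - Fr T) * exp L \<le> 1"
    by (rule LIMSEQ_le_const2[OF lim]) (use bound in \<open>auto intro: exI[of _ 1]\<close>)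
  moreover have "exp L = 1 / \<alpha>" using assms(1) by (simp add: L_def)
  ultimately have "1 - Fr T \<le> \<alpha>" using assms(1) by (simp add: field_simps)
  thus False using Ffin[of T] T0 by simp
qed

end
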